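(* For any quantum automaton $\mathcal{A}$ over alphabet $\Sigma$ and any $w\in\Sigma^\omega$, $$f^{\mathrm{ND}}_{\mathcal{A}}(w)=\limsup_{n\to\infty}f^{\mathrm{MO}}_{\mathcal{A}}(w_n).$$
   Context: A quantum automaton is a tuple $\mathcal{A}=(\mathcal{H},|s_0\rangle,\Sigma,\{U_\sigma:\sigma\in\Sigma\},F)$ where $\mathcal{H}$ is a finite-dimensional complex Hilbert space, $|s_0\rangle$ a unit vector, $\Sigma$ a finite alphabet, each $U_\sigma$ unitary, and $F$ a subspace with orthogonal projection $P_F$. For a finite word $x=\sigma_1\cdots\sigma_m$, $U_x=U_{\sigma_m}\cdots U_{\sigma_1}$ and $f^{\mathrm{MO}}_{\mathcal{A}}(x)=\|P_FU_x|s_0\rangle\|^2$. For $w\in\Sigma^\omega$, $w_n$ is its prefix of length $n$, the non-disturbing run is $|s_n\rangle=U_{w_n}|s_0\rangle$, and $f^{\mathrm{ND}}_{\mathcal{A}}(w)=\sup_{|\psi\rangle}\sup_{\{n_i\}}\inf_{i\ge1}|\langle\psi|s_{n_i}\rangle|^2$ over unit $|\psi\rangle\in F$ and strictly increasing sequences $0\le n_1<n_2<\cdots$. *)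

theory Defs
  imports "HOL-Analysis.Analysis" "HOL-Library.Extended_Nonnegative_Real"
begin

text \<open>Finite-dimensional complex Hilbert space modelled as complex ^ 'n
  (coordinates w.r.t. an orthonormal basis); 'n is a finite index type.\<close>

definition cinner :: "complex ^ 'n \<Rightarrow> complex ^ 'n \<Rightarrow> complex" where
  "cinner x y = (\<Sum>i\<in>UNIV. cnj (x $ i) * y $ i)"

definition cadjoint :: "complex ^ 'n ^ 'n \<Rightarrow> complex ^ 'n ^ 'n" where
  "cadjoint U = (\<chi> i j. cnj (U $ j $ i))"

definition cunitary :: "complex ^ 'n ^ 'n \<Rightarrow> bool" where
  "cunitary U \<longleftrightarrow> cadjoint U ** U = mat 1 \<and> U ** cadjoint U = mat 1"

definition csubspace :: "(complex ^ 'n) set \<Rightarrow> bool" where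
  "csubspace F \<longleftrightarrow> 0 \<in> F \<and> (\<forall>x\<in>F. \<forall>y\<in>F. x + y \<in> F) \<and> (\<forall>c. \<forall>x\<in>F. c *s x \<in> F)"

definition oproj :: "(complex ^ 'n) set \<Rightarrow> complex ^ 'n \<Rightarrow> complex ^ 'n" where
  "oproj F x = (THE y. y \<in> F \<and> (\<forall>z\<in>F. cinner z (x - y) = 0))"

text \<open>U_x |s\<rangle> for x = sigma_1 ... sigma_m: apply U_sigma_1 first.\<close>
definition run :: "('a \<Rightarrow> complex ^ 'n ^ 'n) \<Rightarrow> complex ^ 'n \<Rightarrow> 'a list \<Rightarrow> complex ^ 'n" where
  "run U s0 xs = fold (\<lambda>\<sigma> v. U \<sigma> *v v) xs s0"

definition fMO :: "('a \<Rightarrow> complex ^ 'n ^ 'n) \<Rightarrow> complex ^ 'n \<Rightarrow> (complex ^ 'n) set \<Rightarrow> 'a list \<Rightarrow> real" where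
  "fMO U s0 F xs = (norm (oproj F (run U s0 xs)))\<^sup>2"

definition wprefix :: "(nat \<Rightarrow> 'a) \<Rightarrow> nat \<Rightarrow> 'a list" where
  "wprefix w n = map w [0..<n]"

text \<open>Non-disturbing acceptance value; supremum taken in ennreal (sup of empty set = 0).\<close>
definition fND :: "('a \<Rightarrow> complex ^ 'n ^ 'n) \<Rightarrow> complex ^ 'n \<Rightarrow> (complex ^ 'n) set \<Rightarrow> (nat \<Rightarrow> 'a) \<Rightarrow> ennreal" where
  "fND U s0 F w = (SUP (\<psi>, ns) \<in> {(\<psi>, ns). \<psi> \<in> F \<and> norm \<psi> = 1 \<and> strict_mono (ns :: nat \<Rightarrow> nat)}.
      (INF i. ennreal ((cmod (cinner \<psi> (run U s0 (wprefix w (ns i)))))\<^sup>2)))"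

end

theory Submission
  imports Defs
begin

lemma inner_cinner: "inner x y = Re (cinner x y)"
  unfolding inner_vec_def cinner_def by (simp add: inner_complex_def Re_sum)

lemma cinner_scaleL: "cinner (c *s x) y = cnj c * cinner x y"
  unfolding cinner_def by (simp add: sum_distrib_left mult.assoc)
lemma cinner_scaleR: "cinner x (c *s y) = c * cinner x y"
  unfolding cinner_def by (simp add: sum_distrib_left algebra_simps)
lemma cinner_diffR: "cinner x (y - z) = cinner x y - cinner x z"
  unfolding cinner_def by (simp add: sum_subtractf algebra_simps)
lemma cinner_diffL: "cinner (y - z) x = cinner y x - cinner z x"
  unfolding cinner_def by (simp add: sum_subtractf algebra_simps)
lemma cinner_addR: "cinner x (y + z) = cinner x y + cinner x z"
  unfolding cinner_def by (simp add: sum.distrib algebra_simps)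
lemma cinner_commute: "cinner y x = cnj (cinner x y)"
  unfolding cinner_def by (simp add: mult.commute)
lemma cinner_self: "cinner x x = of_real ((norm x)^2)"
proof -
  have "Im (cinner x x) = 0" unfolding cinner_def by (simp add: Im_sum)
  moreover have "Re (cinner x x) = (norm x)^2"
    using inner_cinner[of x x] by (simp add: power2_norm_eq_inner)
  ultimately show ?thesis by (simp add: complex_eq_iff)
qed

lemma scaleR_as_s: "r *\<^sub>R (x::complex^'n) = (complex_of_real r) *s x"
proof -
  have "(r *\<^sub>R x) $ i = (complex_of_real r *s x) $ i" for i
  proof -
    have "(r *\<^sub>R x) $ i = r *\<^sub>R (x $ i)" by simp
    also have "\<dots> = complex_of_real r * x $ i" by (rule scaleR_conv_of_real)
    finally show ?thesis by simp
  qed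
  then show ?thesis by (simp add: vec_eq_iff)
qed

lemma csub_sub: "csubspace F \<Longrightarrow> subspace F"
  unfolding csubspace_def subspace_def by (metis scaleR_as_s)

lemma norm_scale: "norm (c *s (x::complex^'n)) = cmod c * norm x"
proof -
  have "complex_of_real ((norm (c *s x))^2) = cinner (c *s x) (c *s x)"
    by (simp add: cinner_self)
  also have "\<dots> = (c * cnj c) * cinner x x" by (simp add: cinner_scaleL cinner_scaleR)
  also have "\<dots> = complex_of_real ((cmod c * norm x)^2)"
    by (simp add: cinner_self complex_norm_square[symmetric] power_mult_distrib)
  finally have "(norm (c *s x))^2 = (cmod c * norm x)^2" using of_real_eq_iff by blast
  then show ?thesis by (simp add: power2_eq_iff_nonneg)
qed

lemma csub_scale: "csubspace F \<Longrightarrow> x \<in> F \<Longrightarrow> c *s x \<in> F"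
  unfolding csubspace_def by blast
lemma csub_add: "csubspace F \<Longrightarrow> x \<in> F \<Longrightarrow> y \<in> F \<Longrightarrow> x + y \<in> F"
  unfolding csubspace_def by blast
lemma csub_diff: "csubspace F \<Longrightarrow> x \<in> F \<Longrightarrow> y \<in> F \<Longrightarrow> x - y \<in> F"
  using csub_sub subspace_diff by blast

lemma cinner_iR: "cinner (\<i> *s z) v = - \<i> * cinner z v"
  by (simp add: cinner_scaleL)

lemma proj_exists:
  assumes F: "csubspace F"
  shows "\<exists>y. y \<in> F \<and> (\<forall>z\<in>F. cinner z (x - y) = 0)"
proof -
  have sp: "span F = F" using csub_sub[OF F] by (simp add: span_eq_iff)
  obtain y d where y: "y \<in> span F" and o: "\<And>w. w \<in> span F \<Longrightarrow> orthogonal d w" and xd: "x = y + d"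
    using orthogonal_subspace_decomp_exists[of F x] by blast
  have "cinner z (x - y) = 0" if z: "z \<in> F" for z
  proof -
    have "Re (cinner d z) = 0" using o[of z] z sp by (simp add: orthogonal_def inner_cinner)
    moreover have "Re (cinner d (\<i> *s z)) = 0" using o[of "\<i> *s z"] csub_scale[OF F z] sp
      by (simp add: orthogonal_def inner_cinner)
    then have "Im (cinner d z) = 0" by (simp add: cinner_scaleR)
    ultimately have "cinner d z = 0" by (simp add: complex_eq_iff)
    then have "cinner z d = 0" by (subst cinner_commute) simp
    then show ?thesis using xd by simp
  qed
  then show ?thesis using y sp by blast
qed

lemma proj_unique:
  assumes F: "csubspace F" and y1: "y1 \<in> F" "\<forall>z\<in>F. cinner z (x - y1) = 0"
    and y2: "y2 \<in> F" "\<forall>z\<in>F. cinner z (x - y2) = 0"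
  shows "y1 = y2"
proof -
  have d: "y2 - y1 \<in> F" using csub_diff[OF F y2(1) y1(1)] .
  have "cinner (y2 - y1) (y2 - y1) = cinner (y2 - y1) (x - y1) - cinner (y2 - y1) (x - y2)"
    by (simp add: cinner_diffR[symmetric])
  also have "\<dots> = 0" using d y1 y2 by simp
  finally show ?thesis by (simp add: cinner_self)
qed

lemma oproj:
  assumes F: "csubspace F"
  shows "oproj F x \<in> F" "\<And>z. z \<in> F \<Longrightarrow> cinner z (x - oproj F x) = 0"
proof -
  have ex: "\<exists>!y. y \<in> F \<and> (\<forall>z\<in>F. cinner z (x - y) = 0)"
    using proj_exists[OF F] proj_unique[OF F] by blast
  have "oproj F x \<in> F \<and> (\<forall>z\<in>F. cinner z (x - oproj F x) = 0)"
    unfolding oproj_def by (rule theI'[OF ex])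
  then show "oproj F x \<in> F" "\<And>z. z \<in> F \<Longrightarrow> cinner z (x - oproj F x) = 0" by auto
qed

lemma cinner_proj:
  assumes F: "csubspace F" and z: "z \<in> F"
  shows "cinner z x = cinner z (oproj F x)"
proof -
  have "cinner z (x - oproj F x) = 0" by (rule oproj(2)[OF F z])
  then show ?thesis unfolding cinner_diffR by simp
qed

lemma oproj_diff:
  assumes F: "csubspace F"
  shows "oproj F (a - b) = oproj F a - oproj F b"
proof (rule proj_unique[OF F, of _ "a - b"])
  show "oproj F (a - b) \<in> F" by (rule oproj(1)[OF F])
  show "\<forall>z\<in>F. cinner z (a - b - oproj F (a - b)) = 0"
    using oproj(2)[OF F] by blast
  show "oproj F a - oproj F b \<in> F" using oproj(1)[OF F] csub_diff[OF F] by blast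
  show "\<forall>z\<in>F. cinner z (a - b - (oproj F a - oproj F b)) = 0"
  proof
    fix z assume z: "z \<in> F"
    have "a - b - (oproj F a - oproj F b) = (a - oproj F a) - (b - oproj F b)" by simp
    then show "cinner z (a - b - (oproj F a - oproj F b)) = 0"
      using oproj(2)[OF F z, of a] oproj(2)[OF F z, of b] by (simp only: cinner_diffR) simp
  qed
qed

lemma cmod_cinner_le: "cmod (cinner a b) \<le> norm a * norm b"
proof (cases "cinner a b = 0")
  case True then show ?thesis by simp
next
  case False
  define c where "c = cinner a b"
  define u where "u = cnj c / complex_of_real (cmod c)"
  have cu: "cmod u = 1" using False by (simp add: u_def c_def norm_divide)
  have cc: "cnj c * c = complex_of_real (cmod c) * complex_of_real (cmod c)"
    by (metis complex_norm_square mult.commute of_real_mult power2_eq_square)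
  have "cinner a (u *s b) = u * c" by (simp add: cinner_scaleR c_def)
  also have "\<dots> = cnj c * c / complex_of_real (cmod c)" by (simp add: u_def)
  also have "\<dots> = complex_of_real (cmod c)"
    using False unfolding cc by (simp add: c_def)
  finally have "cinner a (u *s b) = complex_of_real (cmod c)" .
  then have "cmod c = inner a (u *s b)" by (simp add: inner_cinner)
  also have "\<dots> \<le> norm a * norm (u *s b)" by (rule norm_cauchy_schwarz)
  also have "\<dots> = norm a * norm b" by (simp add: norm_scale cu)
  finally show ?thesis by (simp add: c_def)
qed

lemma norm_oproj_le:
  assumes F: "csubspace F"
  shows "norm (oproj F v) \<le> norm v"
proof -
  have "(norm (oproj F v))^2 = Re (cinner (oproj F v) (oproj F v))" by (simp add: cinner_self)
  also have "\<dots> = Re (cinner (oproj F v) v)" using cinner_proj[OF F oproj(1)[OF F]] by simp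
  also have "\<dots> \<le> cmod (cinner (oproj F v) v)" by (rule complex_Re_le_cmod)
  also have "\<dots> \<le> norm (oproj F v) * norm v" by (rule cmod_cinner_le)
  finally have "(norm (oproj F v))^2 \<le> norm (oproj F v) * norm v" .
  show ?thesis
  proof (rule ccontr)
    assume "\<not> ?thesis"
    then have lt: "norm v < norm (oproj F v)" by simp
    then have "0 < norm (oproj F v)" using norm_ge_zero[of v] by linarith
    then have "norm (oproj F v) * norm v < norm (oproj F v) * norm (oproj F v)"
      using lt by (simp add: mult_strict_left_mono)
    then show False using \<open>(norm (oproj F v))^2 \<le> norm (oproj F v) * norm v\<close> by (simp add: power2_eq_square)
  qed
qed

lemma bound_proj:
  assumes F: "csubspace F" and p: "\<psi> \<in> F" "norm \<psi> = 1"
  shows "(cmod (cinner \<psi> x))^2 \<le> (norm (oproj F x))^2"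
proof -
  have "cmod (cinner \<psi> x) \<le> norm (oproj F x)"
    using cinner_proj[OF F p(1), of x] cmod_cinner_le[of \<psi> "oproj F x"] p(2) by simp
  then show ?thesis by (simp add: power_mono)
qed

lemma cinner_adj: "cinner (A *v x) y = cinner x (cadjoint A *v y)"
proof -
  have "cinner (A *v x) y = (\<Sum>i\<in>UNIV. \<Sum>j\<in>UNIV. cnj (A$i$j) * cnj (x$j) * y$i)"
    unfolding cinner_def matrix_vector_mult_def by (simp add: sum_distrib_right)
  also have "\<dots> = (\<Sum>j\<in>UNIV. \<Sum>i\<in>UNIV. cnj (A$i$j) * cnj (x$j) * y$i)" by (rule sum.swap)
  also have "\<dots> = cinner x (cadjoint A *v y)"
    unfolding cinner_def matrix_vector_mult_def cadjoint_def by (simp add: sum_distrib_left mult_ac)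
  finally show ?thesis .
qed

lemma unitary_norm:
  assumes "cunitary A" shows "norm (A *v x) = norm x"
proof -
  have "cinner (A *v x) (A *v x) = cinner x x"
  proof -
    have "cinner (A *v x) (A *v x) = cinner x (cadjoint A *v (A *v x))" by (rule cinner_adj)
    also have "cadjoint A *v (A *v x) = x"
      using assms unfolding cunitary_def by (simp add: matrix_vector_mul_assoc)
    finally show ?thesis .
  qed
  then have "complex_of_real ((norm (A *v x))^2) = complex_of_real ((norm x)^2)" by (simp only: cinner_self)
  then have "(norm (A *v x))^2 = (norm x)^2" using of_real_eq_iff by blast
  then show ?thesis by (simp add: power2_eq_iff_nonneg)
qed

lemma run_Suc: "run U s0 (wprefix w (Suc n)) = U (w n) *v run U s0 (wprefix w n)"
  unfolding run_def wprefix_def by simp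

lemma run_norm:
  assumes "norm s0 = 1" "\<forall>\<sigma>\<in>\<Sigma>. cunitary (U \<sigma>)" "\<forall>i. w i \<in> \<Sigma>"
  shows "norm (run U s0 (wprefix w n)) = 1"
proof (induction n)
  case 0 then show ?case using assms(1) by (simp add: run_def wprefix_def)
next
  case (Suc n) then show ?case using assms(2,3) by (simp add: run_Suc unitary_norm)
qed


theorem proposition2:
  fixes \<Sigma> :: "'a set" and U :: "'a \<Rightarrow> complex ^ 'n ^ 'n" and s0 :: "complex ^ 'n"
    and F :: "(complex ^ 'n) set" and w :: "nat \<Rightarrow> 'a"
  assumes "finite \<Sigma>"
    and "norm s0 = 1"
    and "\<forall>\<sigma>\<in>\<Sigma>. cunitary (U \<sigma>)"
    and "csubspace F"
    and "\<forall>i. w i \<in> \<Sigma>"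
  shows "fND U s0 F w = limsup (\<lambda>n. ennreal (fMO U s0 F (wprefix w n)))"
proof -
  define s where "s n = run U s0 (wprefix w n)" for n
  define a where "a n = ennreal (fMO U s0 F (wprefix w n))" for n
  have F: "csubspace F" by fact
  have sn: "norm (s n) = 1" for n unfolding s_def using run_norm assms(2,3,5) by blast
  have aeq: "a n = ennreal ((norm (oproj F (s n)))^2)" for n by (simp add: a_def fMO_def s_def)
  have le: "fND U s0 F w \<le> limsup a"
    unfolding fND_def
  proof (rule SUP_least)
    fix p assume "p \<in> {(\<psi>, ns). \<psi> \<in> F \<and> norm \<psi> = 1 \<and> strict_mono (ns :: nat \<Rightarrow> nat)}"
    then obtain \<psi> ns where p: "p = (\<psi>, ns)" "\<psi> \<in> F" "norm \<psi> = 1" "strict_mono (ns :: nat \<Rightarrow> nat)" by blast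
    have "(INF i. ennreal ((cmod (cinner \<psi> (run U s0 (wprefix w (ns i)))))\<^sup>2)) \<le> limsup a"
      unfolding limsup_INF_SUP
    proof (rule INF_greatest)
      fix n :: nat
      have "(INF i. ennreal ((cmod (cinner \<psi> (run U s0 (wprefix w (ns i)))))\<^sup>2))
          \<le> ennreal ((cmod (cinner \<psi> (run U s0 (wprefix w (ns n)))))\<^sup>2)" by (rule INF_lower) simp
      also have "\<dots> \<le> a (ns n)" unfolding aeq s_def
        by (rule ennreal_leI) (rule bound_proj[OF F p(2,3)])
      also have "\<dots> \<le> (SUP m\<in>{n..}. a m)" by (rule SUP_upper) (simp add: seq_suble[OF p(4)])
      finally show "(INF i. ennreal ((cmod (cinner \<psi> (run U s0 (wprefix w (ns i)))))\<^sup>2))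
          \<le> (SUP m\<in>{n..}. a m)" .
    qed
    then show "(case p of (\<psi>, ns) \<Rightarrow> INF i. ennreal ((cmod (cinner \<psi> (run U s0 (wprefix w (ns i)))))\<^sup>2)) \<le> limsup a"
      using p(1) by simp
  qed
  have ge: "limsup a \<le> fND U s0 F w"
  proof -
    obtain r where r: "strict_mono r" "(a \<circ> r) \<longlonglongrightarrow> limsup a" using limsup_subseq_lim by blast
    have "bounded (range (s \<circ> r))" unfolding bounded_iff using sn by auto
    then obtain l r2 where r2: "strict_mono (r2 :: nat \<Rightarrow> nat)" "((s \<circ> r) \<circ> r2) \<longlonglongrightarrow> l"
      using bounded_imp_convergent_subsequence by blast
    define t where "t n = s (r (r2 n))" for n
    have tl: "t \<longlonglongrightarrow> l" using r2(2) unfolding t_def[abs_def] by (simp add: o_def)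
    have "(\<lambda>n. oproj F (t n) - oproj F l) \<longlonglongrightarrow> 0"
    proof (rule Lim_null_comparison)
      show "\<forall>\<^sub>F n in sequentially. norm (oproj F (t n) - oproj F l) \<le> norm (t n - l)"
        using norm_oproj_le[OF F] oproj_diff[OF F] by (simp add: oproj_diff[OF F, symmetric])
      show "(\<lambda>n. norm (t n - l)) \<longlonglongrightarrow> 0" using tl by (simp add: LIM_zero_iff tendsto_norm_zero_iff)
    qed
    then have Pt: "(\<lambda>n. oproj F (t n)) \<longlonglongrightarrow> oproj F l" by (simp add: LIM_zero_iff)
    define c where "c = (norm (oproj F l))^2"
    have "(\<lambda>n. a (r (r2 n))) \<longlonglongrightarrow> ennreal c"
      unfolding aeq c_def t_def[symmetric] by (intro tendsto_intros Pt)
    moreover have "(\<lambda>n. a (r (r2 n))) \<longlonglongrightarrow> limsup a"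
      using LIMSEQ_subseq_LIMSEQ[OF r(2) r2(1)] by (simp add: o_def)
    ultimately have Lc: "limsup a = ennreal c" using LIMSEQ_unique by blast
    have "ennreal c \<le> fND U s0 F w"
    proof (cases "oproj F l = 0")
      case True then show ?thesis by (simp add: c_def)
    next
      case False
      define nP where "nP = norm (oproj F l)"
      have nP: "nP > 0" using False by (simp add: nP_def)
      define \<psi> where "\<psi> = complex_of_real (1 / nP) *s oproj F l"
      have \<psi>F: "\<psi> \<in> F" unfolding \<psi>_def by (rule csub_scale[OF F oproj(1)[OF F]])
      have \<psi>n: "norm \<psi> = 1" unfolding \<psi>_def using nP by (simp add: norm_scale norm_divide nP_def[symmetric])
      have "cinner \<psi> l = cinner \<psi> (oproj F l)" by (rule cinner_proj[OF F \<psi>F])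
      also have "\<dots> = complex_of_real (1 / nP) * complex_of_real (nP^2)"
        unfolding \<psi>_def by (simp add: cinner_scaleL cinner_self nP_def)
      also have "\<dots> = complex_of_real nP" using nP by (simp add: power2_eq_square)
      finally have cl: "cinner \<psi> l = complex_of_real nP" .
      have "(\<lambda>n. cinner \<psi> (t n)) \<longlonglongrightarrow> cinner \<psi> l"
        unfolding cinner_def by (intro tendsto_intros tl)
      then have gt: "(\<lambda>n. (cmod (cinner \<psi> (t n)))^2) \<longlonglongrightarrow> c"
        unfolding c_def nP_def[symmetric] using cl by (metis norm_of_real abs_of_pos nP tendsto_norm tendsto_power)
      show ?thesis
      proof (rule ennreal_le_epsilon)
        fix e :: real assume e: "0 < e"
        have "\<forall>\<^sub>F n in sequentially. c - e < (cmod (cinner \<psi> (t n)))^2"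
          using order_tendstoD(1)[OF gt] e by simp
        then obtain N where N: "\<And>n. n \<ge> N \<Longrightarrow> c - e < (cmod (cinner \<psi> (t n)))^2"
          unfolding eventually_sequentially by blast
        define ns where "ns i = r (r2 (N + i))" for i
        have sm: "strict_mono ns" unfolding ns_def strict_mono_def
          using r(1) r2(1) by (simp add: strict_mono_less)
        have runt: "run U s0 (wprefix w (ns i)) = t (N + i)" for i by (simp add: ns_def t_def s_def)
        have "ennreal (c - e) \<le> (INF i. ennreal ((cmod (cinner \<psi> (run U s0 (wprefix w (ns i)))))\<^sup>2))"
          unfolding runt by (rule INF_greatest, rule ennreal_leI) (metis N le_add1 less_imp_le)
        also have "\<dots> \<le> fND U s0 F w"
          unfolding fND_def
          by (rule SUP_upper2[where i="(\<psi>, ns)"]) (use \<psi>F \<psi>n sm in auto)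
        finally have 1: "ennreal (c - e) \<le> fND U s0 F w" .
        have 2: "ennreal c \<le> ennreal (c - e) + ennreal e"
        proof (cases "c - e \<ge> 0")
          case True then show ?thesis using e by (simp add: ennreal_plus[symmetric])
        next
          case False then show ?thesis by (simp add: ennreal_leI ennreal_neg)
        qed
        show "ennreal c \<le> fND U s0 F w + ennreal e"
          using 2 add_right_mono[OF 1, of "ennreal e"] by (rule order_trans)
      qed
    qed
    then show ?thesis using Lc by simp
  qed
  show ?thesis using le ge unfolding a_def by (rule antisym)
qed

end
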